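(* If $Y$ is a finite connected simple undirected graph on $n$ vertices, then $\kappa(Y)\leq\tfrac1n\,\alpha(Y)$.
   Context: $\alpha(Y)$ is the number of acyclic orientations of $Y$. A click at a vertex $x$ that is a source of an orientation reverses all edges incident to $x$, making $x$ a sink. Two acyclic orientations are $\kappa$-equivalent if one can be transformed into the other by a finite sequence of clicks; $\kappa(Y)$ is the number of $\kappa$-equivalence classes. *)

theory Defs
  imports Complex_Main
begin

definition simple_graph :: "'a set \<Rightarrow> 'a set set \<Rightarrow> bool" where
  "simple_graph V E \<longleftrightarrow> finite V \<and>
     (\<forall>e\<in>E. \<exists>u v. u \<in> V \<and> v \<in> V \<and> u \<noteq> v \<and> e = {u, v})"

definition connected_graph :: "'a set \<Rightarrow> 'a set set \<Rightarrow> bool" where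
  "connected_graph V E \<longleftrightarrow> V \<noteq> {} \<and>
     (\<forall>u\<in>V. \<forall>v\<in>V. (u, v) \<in> {(a, b). {a, b} \<in> E}\<^sup>*)"

definition orientation :: "'a set \<Rightarrow> 'a set set \<Rightarrow> ('a \<times> 'a) set \<Rightarrow> bool" where
  "orientation V E R \<longleftrightarrow> (\<forall>(a, b)\<in>R. {a, b} \<in> E) \<and>
     (\<forall>a b. {a, b} \<in> E \<longrightarrow> ((a, b) \<in> R \<longleftrightarrow> (b, a) \<notin> R))"

definition acyclic_orientations :: "'a set \<Rightarrow> 'a set set \<Rightarrow> ('a \<times> 'a) set set" where
  "acyclic_orientations V E = {R. orientation V E R \<and> acyclic R}"

definition alpha :: "'a set \<Rightarrow> 'a set set \<Rightarrow> nat" where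
  "alpha V E = card (acyclic_orientations V E)"

definition is_source :: "('a \<times> 'a) set \<Rightarrow> 'a \<Rightarrow> bool" where
  "is_source R x \<longleftrightarrow> (\<forall>y. (y, x) \<notin> R)"

definition click :: "('a \<times> 'a) set \<Rightarrow> 'a \<Rightarrow> ('a \<times> 'a) set" where
  "click R x = {(a, b) \<in> R. a \<noteq> x \<and> b \<noteq> x} \<union> {(b, a) | a b. (a, b) \<in> R \<and> (a = x \<or> b = x)}"

definition click_step :: "'a set \<Rightarrow> 'a set set \<Rightarrow> (('a \<times> 'a) set \<times> ('a \<times> 'a) set) set" where
  "click_step V E = {(R, R'). R \<in> acyclic_orientations V E \<and>
       (\<exists>x\<in>V. is_source R x \<and> R' = click R x)}"

definition kappa_equiv :: "'a set \<Rightarrow> 'a set set \<Rightarrow> (('a \<times> 'a) set \<times> ('a \<times> 'a) set) set" where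
  "kappa_equiv V E = (click_step V E \<union> (click_step V E)\<inverse>)\<^sup>*"

definition kappa :: "'a set \<Rightarrow> 'a set set \<Rightarrow> nat" where
  "kappa V E = card (acyclic_orientations V E // kappa_equiv V E)"

end

theory Submission
  imports Defs
begin
lemma orient_sub:
  assumes "simple_graph V E" "orientation V E R"
  shows "R \<subseteq> V \<times> V"
proof
  fix p assume "p \<in> R"
  then obtain a b where p: "p = (a,b)" "(a,b) \<in> R" by (cases p) auto
  then have "{a,b} \<in> E" using assms(2) unfolding orientation_def by auto
  then obtain u v where "u \<in> V" "v \<in> V" "{a,b} = {u,v}" using assms(1) unfolding simple_graph_def by blast
  then show "p \<in> V \<times> V" using p by (auto simp: doubleton_eq_iff)
qed

lemma orient_finite:
  assumes "simple_graph V E" "orientation V E R"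
  shows "finite R"
  using orient_sub[OF assms] assms(1) unfolding simple_graph_def
  by (meson finite_SigmaI finite_subset)

lemma click_orient:
  assumes "orientation V E F" "is_source F x"
  shows "orientation V E (click F x)"
  using assms unfolding orientation_def click_def is_source_def
  by (smt (verit) case_prodD case_prodI2 insert_commute mem_Collect_eq UnE UnI1 UnI2 Pair_inject)

lemma click_acyclic:
  assumes "simple_graph V E" "F \<in> acyclic_orientations V E" "is_source F x"
  shows "click F x \<in> acyclic_orientations V E"
proof -
  have o: "orientation V E F" and ac: "acyclic F" using assms(2) unfolding acyclic_orientations_def by auto
  have fin: "finite F" using orient_finite[OF assms(1) o] .
  have wfF: "wf F" using finite_acyclic_wf[OF fin ac] .
  let ?A = "{(a, b) \<in> F. a \<noteq> x \<and> b \<noteq> x}"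
  let ?B = "{(b, x) | b. (x, b) \<in> F}"
  have eq: "click F x = ?A \<union> ?B" using assms(3) unfolding click_def is_source_def by auto
  have irr: "(x,x) \<notin> F" using ac unfolding acyclic_def by blast
  have wA: "wf ?A" by (rule wf_subset[OF wfF]) auto
  have wB: "wf ?B"
  proof (rule wfI_min)
    fix a :: 'a and Q assume "a \<in> Q"
    show "\<exists>z\<in>Q. \<forall>y. (y, z) \<in> ?B \<longrightarrow> y \<notin> Q"
    proof (cases "\<exists>z\<in>Q. z \<noteq> x")
      case True then show ?thesis by blast
    next
      case False
      then have "x \<in> Q" "\<And>y. y \<in> Q \<Longrightarrow> y = x" using \<open>a \<in> Q\<close> by auto
      have "\<forall>y. (y, x) \<in> ?B \<longrightarrow> y \<notin> Q"
      proof (intro allI impI)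
        fix y assume "(y, x) \<in> ?B"
        then have "(x, y) \<in> F" by blast
        then have "y \<noteq> x" using irr by blast
        then show "y \<notin> Q" using \<open>\<And>y. y \<in> Q \<Longrightarrow> y = x\<close> by blast
      qed
      then show ?thesis using \<open>x \<in> Q\<close> by blast
    qed
  qed
  have "wf (?A \<union> ?B)" by (rule wf_Un[OF wA wB]) auto
  then have "acyclic (click F x)" using eq wf_acyclic by metis
  then show ?thesis using click_orient[OF o assms(3)] unfolding acyclic_orientations_def by auto
qed

definition flip :: "('a \<times> 'a) set \<Rightarrow> 'a set \<Rightarrow> ('a \<times> 'a) set" where
  "flip R S = {(a, b). (a, b) \<in> R \<and> (a \<in> S \<longleftrightarrow> b \<in> S)} \<union>
              {(b, a) | a b. (a, b) \<in> R \<and> (a \<in> S \<longleftrightarrow> b \<notin> S)}"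

definition downset :: "('a \<times> 'a) set \<Rightarrow> 'a set \<Rightarrow> bool" where
  "downset R S \<longleftrightarrow> (\<forall>u v. (u, v) \<in> R \<longrightarrow> v \<in> S \<longrightarrow> u \<in> S)"

lemma flip_empty: "flip R {} = R"
  unfolding flip_def by auto

lemma flip_step:
  assumes "downset R S" "v \<notin> S" "\<And>u. (u, v) \<in> R \<Longrightarrow> u \<in> S"
  shows "is_source (flip R S) v" "click (flip R S) v = flip R (insert v S)"
proof -
  show "is_source (flip R S) v"
    using assms unfolding is_source_def flip_def downset_def by blast
  show "click (flip R S) v = flip R (insert v S)"
    using assms unfolding click_def flip_def downset_def by blast
qed

lemma flip_mem:
  assumes "orientation V E R" "(x, y) \<in> R"
  shows "(x, y) \<in> flip R S \<longleftrightarrow> (x \<in> S \<longleftrightarrow> y \<in> S)"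
proof -
  have "{x, y} \<in> E" using assms unfolding orientation_def by auto
  then have "(y, x) \<notin> R" using assms unfolding orientation_def by auto
  then show ?thesis using assms(2) unfolding flip_def by auto
qed

lemma cut_edge:
  assumes "(x, y) \<in> {(a, b). {a, b} \<in> E}\<^sup>*" "x \<in> D" "y \<notin> D"
  shows "\<exists>a b. {a, b} \<in> E \<and> a \<in> D \<and> b \<notin> D"
  using assms
proof (induction rule: rtrancl_induct)
  case base then show ?case by simp
next
  case (step y z)
  show ?case
  proof (cases "y \<in> D")
    case True then show ?thesis using step by auto
  next
    case False then show ?thesis using step by auto
  qed
qed

lemma flip_distinct:
  assumes "orientation V E R" "connected_graph V E" "S \<subseteq> T" "T \<subseteq> V" "a \<in> T - S" "c \<in> V - T"
  shows "flip R S \<noteq> flip R T"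
proof -
  have "(a, c) \<in> {(a, b). {a, b} \<in> E}\<^sup>*" using assms(2,4,5,6) unfolding connected_graph_def by blast
  then obtain x y where e: "{x, y} \<in> E" "x \<in> T - S" "y \<notin> T - S"
    using cut_edge[of a c E "T - S"] assms(5,6) by blast
  have "(x, y) \<in> R \<or> (y, x) \<in> R" using e(1) assms(1) unfolding orientation_def by blast
  then show ?thesis
  proof
    assume r: "(x, y) \<in> R"
    show ?thesis using flip_mem[OF assms(1) r, of S] flip_mem[OF assms(1) r, of T] e assms(3) by blast
  next
    assume r: "(y, x) \<in> R"
    show ?thesis using flip_mem[OF assms(1) r, of S] flip_mem[OF assms(1) r, of T] e assms(3) by blast
  qed
qed

lemma exists_next:
  assumes "simple_graph V E" "R \<in> acyclic_orientations V E" "S \<subset> V"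
  shows "\<exists>v. v \<in> V - S \<and> (\<forall>u. (u, v) \<in> R \<longrightarrow> u \<in> S)"
proof -
  have o: "orientation V E R" and ac: "acyclic R" using assms(2) unfolding acyclic_orientations_def by auto
  have wfR: "wf R" using finite_acyclic_wf[OF orient_finite[OF assms(1) o] ac] .
  obtain x where x: "x \<in> V - S" using assms(3) by blast
  obtain z where z: "z \<in> V - S" "\<And>y. (y, z) \<in> R \<Longrightarrow> y \<notin> V - S"
    using wfE_min[OF wfR x] by blast
  have "\<forall>u. (u, z) \<in> R \<longrightarrow> u \<in> S"
    using z orient_sub[OF assms(1) o] by blast
  then show ?thesis using z(1) by blast
qed

fun chain :: "('a \<times> 'a) set \<Rightarrow> 'a set \<Rightarrow> nat \<Rightarrow> 'a set" where
  "chain R V 0 = {}"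
| "chain R V (Suc k) = insert (SOME v. v \<in> V - chain R V k \<and> (\<forall>u. (u, v) \<in> R \<longrightarrow> u \<in> chain R V k)) (chain R V k)"

lemma chain_props:
  assumes "simple_graph V E" "R \<in> acyclic_orientations V E" "k \<le> card V"
  shows "chain R V k \<subseteq> V \<and> card (chain R V k) = k \<and> downset R (chain R V k)
     \<and> flip R (chain R V k) \<in> acyclic_orientations V E
     \<and> (R, flip R (chain R V k)) \<in> kappa_equiv V E"
  using assms(3)
proof (induction k)
  case 0
  then show ?case using assms(2) by (simp add: flip_empty downset_def kappa_equiv_def)
next
  case (Suc k)
  let ?S = "chain R V k"
  have IH: "?S \<subseteq> V" "card ?S = k" "downset R ?S" "flip R ?S \<in> acyclic_orientations V E"
    "(R, flip R ?S) \<in> kappa_equiv V E" using Suc by auto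
  have fin: "finite V" using assms(1) unfolding simple_graph_def by auto
  have "?S \<subset> V" using IH(1,2) Suc.prems by auto
  then have ex: "\<exists>v. v \<in> V - ?S \<and> (\<forall>u. (u, v) \<in> R \<longrightarrow> u \<in> ?S)"
    using exists_next[OF assms(1,2)] by blast
  define v where "v = (SOME v. v \<in> V - ?S \<and> (\<forall>u. (u, v) \<in> R \<longrightarrow> u \<in> ?S))"
  have v: "v \<in> V - ?S" "\<And>u. (u, v) \<in> R \<Longrightarrow> u \<in> ?S"
    using someI_ex[OF ex] unfolding v_def by blast+
  have ch: "chain R V (Suc k) = insert v ?S" by (simp add: v_def)
  have src: "is_source (flip R ?S) v" and cl: "click (flip R ?S) v = flip R (insert v ?S)"
    using flip_step[OF IH(3), of v] v by auto
  have step: "(flip R ?S, flip R (insert v ?S)) \<in> click_step V E"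
    unfolding click_step_def using IH(4) v(1) src cl by auto
  have "(R, flip R (insert v ?S)) \<in> kappa_equiv V E"
    using IH(5) step unfolding kappa_equiv_def by (meson UnI1 rtrancl.rtrancl_into_rtrancl)
  moreover have "flip R (insert v ?S) \<in> acyclic_orientations V E"
    using click_acyclic[OF assms(1) IH(4) src] cl by simp
  moreover have "downset R (insert v ?S)" using IH(3) v unfolding downset_def by blast
  moreover have "finite ?S" using IH(1) fin finite_subset by blast
  then have "card (insert v ?S) = Suc k" using IH(2) v(1) by simp
  ultimately show ?case using ch IH(1) v(1) by auto
qed

lemma chain_mono:
  assumes "j \<le> k" shows "chain R V j \<subseteq> chain R V k"
  using assms by (induction k) (auto simp: le_Suc_eq)

lemma ke_closed:
  assumes "simple_graph V E" "(R, X) \<in> kappa_equiv V E" "R \<in> acyclic_orientations V E"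
  shows "X \<in> acyclic_orientations V E"
  using assms(2,3) unfolding kappa_equiv_def
proof (induction rule: rtrancl_induct)
  case base then show ?case .
next
  case (step Y X)
  from step(2) show ?case
  proof
    assume "(Y, X) \<in> click_step V E"
    then obtain x where "Y \<in> acyclic_orientations V E" "is_source Y x" "X = click Y x"
      unfolding click_step_def by blast
    then show ?thesis using click_acyclic[OF assms(1)] by blast
  next
    assume "(Y, X) \<in> (click_step V E)\<inverse>"
    then show ?thesis unfolding click_step_def by blast
  qed
qed

lemma ke_sym: "sym (kappa_equiv V E)"
  unfolding kappa_equiv_def by (simp add: sym_Un_converse sym_rtrancl)

lemma ke_trans: "trans (kappa_equiv V E)"
  unfolding kappa_equiv_def by (rule trans_rtrancl)

lemma class_size:
  assumes "simple_graph V E" "connected_graph V E" "R \<in> acyclic_orientations V E"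
  shows "card V \<le> card (kappa_equiv V E `` {R})"
proof -
  let ?n = "card V"
  let ?f = "\<lambda>k. flip R (chain R V k)"
  have o: "orientation V E R" using assms(3) unfolding acyclic_orientations_def by auto
  have finV: "finite V" using assms(1) unfolding simple_graph_def by auto
  have finAO: "finite (acyclic_orientations V E)"
  proof -
    have "acyclic_orientations V E \<subseteq> Pow (V \<times> V)"
      unfolding acyclic_orientations_def using orient_sub[OF assms(1)] by blast
    then show ?thesis using finV by (meson finite_Pow_iff finite_SigmaI finite_subset)
  qed
  have sub: "kappa_equiv V E `` {R} \<subseteq> acyclic_orientations V E"
    using ke_closed[OF assms(1) _ assms(3)] by blast
  have img: "?f ` {..<?n} \<subseteq> kappa_equiv V E `` {R}"
  proof
    fix X assume "X \<in> ?f ` {..<?n}"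
    then obtain k where k: "k < ?n" "X = ?f k" by blast
    then have "k \<le> card V" by simp
    note cp = chain_props[OF assms(1,3) this]
    have "(R, ?f k) \<in> kappa_equiv V E" using cp by blast
    then show "X \<in> kappa_equiv V E `` {R}" using k(2) by blast
  qed
  have inj: "inj_on ?f {..<?n}"
  proof (rule inj_onI, rule ccontr)
    fix j k assume jk: "j \<in> {..<?n}" "k \<in> {..<?n}" "?f j = ?f k" "j \<noteq> k"
    have gen: "?f j \<noteq> ?f k" if "j < k" "k < ?n" for j k
    proof -
      have "j \<le> card V" "k \<le> card V" using that by simp_all
      note cpj = chain_props[OF assms(1,3) this(1)] and cpk = chain_props[OF assms(1,3) this(2)]
      have pj: "chain R V j \<subseteq> V" "card (chain R V j) = j" using cpj by blast+
      have pk: "chain R V k \<subseteq> V" "card (chain R V k) = k" using cpk by blast+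
      have m: "chain R V j \<subseteq> chain R V k" using chain_mono[of j k] that by simp
      have "chain R V k - chain R V j \<noteq> {}"
      proof
        assume "chain R V k - chain R V j = {}"
        then have "chain R V k \<subseteq> chain R V j" by blast
        moreover have "finite (chain R V j)" using pj(1) finV finite_subset by blast
        ultimately have "card (chain R V k) \<le> card (chain R V j)" by (simp add: card_mono)
        then have "k \<le> j" using pj(2) pk(2) by simp
        then show False using that by simp
      qed
      then obtain a where a: "a \<in> chain R V k - chain R V j" by blast
      have "V - chain R V k \<noteq> {}"
      proof
        assume "V - chain R V k = {}"
        then have "V \<subseteq> chain R V k" by blast
        then have "card V \<le> card (chain R V k)" using finV pk(1) by (simp add: card_mono)
        then have "?n \<le> k" using pk(2) by simp
        then show False using that by simp
      qed
      then obtain c where c: "c \<in> V - chain R V k" by blast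
      show ?thesis using flip_distinct[OF o assms(2) m pk(1) a c] .
    qed
    show False
    proof (cases "j < k")
      case True
      have "k < ?n" using jk(2) by simp
      then have "?f j \<noteq> ?f k" using gen[of j k] True by blast
      then show False using jk(3) by blast
    next
      case False then have kj: "k < j" using jk(4) by simp
      have "j < ?n" using jk(1) by simp
      then have "?f k \<noteq> ?f j" using gen[of k j] kj by blast
      then show False using jk(3) by simp
    qed
  qed
  have "card (?f ` {..<?n}) = ?n" using card_image[OF inj] by simp
  moreover have "finite (kappa_equiv V E `` {R})" using sub finAO finite_subset by blast
  ultimately show ?thesis using img card_mono[of "kappa_equiv V E `` {R}" "?f ` {..<?n}"] by simp
qed

lemma ke_class_eq:
  assumes "(a, b) \<in> kappa_equiv V E"
  shows "kappa_equiv V E `` {a} = kappa_equiv V E `` {b}"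
proof -
  have tr: "\<And>x y z. (x, y) \<in> kappa_equiv V E \<Longrightarrow> (y, z) \<in> kappa_equiv V E \<Longrightarrow> (x, z) \<in> kappa_equiv V E"
    unfolding kappa_equiv_def by (meson rtrancl_trans)
  have ba: "(b, a) \<in> kappa_equiv V E" using assms ke_sym by (meson symD)
  show ?thesis
  proof
    show "kappa_equiv V E `` {a} \<subseteq> kappa_equiv V E `` {b}"
    proof
      fix z assume "z \<in> kappa_equiv V E `` {a}"
      then have "(a, z) \<in> kappa_equiv V E" by simp
      then show "z \<in> kappa_equiv V E `` {b}" using tr[OF ba] by simp
    qed
    show "kappa_equiv V E `` {b} \<subseteq> kappa_equiv V E `` {a}"
    proof
      fix z assume "z \<in> kappa_equiv V E `` {b}"
      then have "(b, z) \<in> kappa_equiv V E" by simp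
      then show "z \<in> kappa_equiv V E `` {a}" using tr[OF assms] by simp
    qed
  qed
qed

theorem proposition4:
  fixes V :: "'a set" and E :: "'a set set"
  assumes "simple_graph V E" and "connected_graph V E"
  shows "real (kappa V E) \<le> real (alpha V E) / real (card V)"
proof -
  let ?AO = "acyclic_orientations V E"
  let ?KE = "kappa_equiv V E"
  let ?Q = "?AO // ?KE"
  have finV: "finite V" using assms(1) unfolding simple_graph_def by auto
  have npos: "card V > 0" using assms(2) finV unfolding connected_graph_def by (simp add: card_gt_0_iff)
  have finAO: "finite ?AO"
  proof -
    have "?AO \<subseteq> Pow (V \<times> V)"
      unfolding acyclic_orientations_def using orient_sub[OF assms(1)] by blast
    then show ?thesis using finV by (meson finite_Pow_iff finite_SigmaI finite_subset)
  qed
  have clsub: "C \<subseteq> ?AO" if "C \<in> ?Q" for C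
    using that ke_closed[OF assms(1)] unfolding quotient_def by blast
  have union: "\<Union>?Q = ?AO"
  proof
    show "\<Union>?Q \<subseteq> ?AO" using clsub by blast
    show "?AO \<subseteq> \<Union>?Q"
    proof
      fix R assume "R \<in> ?AO"
      moreover have "R \<in> ?KE `` {R}" unfolding kappa_equiv_def by simp
      ultimately show "R \<in> \<Union>?Q" unfolding quotient_def by blast
    qed
  qed
  have disj: "pairwise disjnt ?Q"
  proof (rule pairwiseI)
    fix X Y assume XY: "X \<in> ?Q" "Y \<in> ?Q" "X \<noteq> Y"
    obtain a where a: "X = ?KE `` {a}" using XY(1) unfolding quotient_def by blast
    obtain b where b: "Y = ?KE `` {b}" using XY(2) unfolding quotient_def by blast
    show "disjnt X Y"
    proof (rule ccontr)
      assume "\<not> disjnt X Y"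
      then obtain z where "(a, z) \<in> ?KE" "(b, z) \<in> ?KE" using a b unfolding disjnt_def by blast
      then have za: "(z, a) \<in> ?KE" using ke_sym by (meson symD)
      have "(b, a) \<in> ?KE" using \<open>(b, z) \<in> ?KE\<close> za unfolding kappa_equiv_def by (meson rtrancl_trans)
      then have "Y = X" using a b ke_class_eq by metis
      then show False using XY(3) by simp
    qed
  qed
  have finC: "\<And>C. C \<in> ?Q \<Longrightarrow> finite C" using clsub finAO finite_subset by blast
  have "card (\<Union>?Q) = sum card ?Q" by (rule card_Union_disjoint[OF disj finC])
  then have "card ?AO = sum card ?Q" using union by simp
  moreover have "card ?Q * card V \<le> sum card ?Q"
  proof -
    have "\<And>C. C \<in> ?Q \<Longrightarrow> card V \<le> card C"
      using class_size[OF assms] unfolding quotient_def by blast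
    then show ?thesis using sum_bounded_below[of ?Q "card V" card] by simp
  qed
  ultimately have "kappa V E * card V \<le> alpha V E" unfolding kappa_def alpha_def by simp
  then have "real (kappa V E) * real (card V) \<le> real (alpha V E)" by (metis of_nat_le_iff of_nat_mult)
  moreover have cpos: "real (card V) > 0" using npos by simp
  ultimately show ?thesis by (simp only: pos_le_divide_eq[OF cpos])
qed

end
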